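(* For any $y,\bar y\in\mathbb R$, $$\|\nabla w_h(y)\|\le C_P\|f\|,\qquad \|w_h(y)\|\le e^{-y}\|f\|,$$ $$\|\nabla(w_h(y)-w_h(\bar y))\|\le C_P^3|e^y-e^{\bar y}|\,\|f\|,$$ $$\|w_h(y)-w_h(\bar y)\|\le e^{-y}|e^{y-\bar y}-1|\,\|f\|,$$ $$\|\nabla(w_h(y)-w_h(\bar y))\|\le\tfrac12e^{-y/2}|e^{y-\bar y}-1|\,\|f\|.$$
   Context: $\Omega\subset\mathbb R^d$, $d\in\{1,2,3\}$, is a bounded polyhedral domain and $\|\cdot\|$ is the $L^2(\Omega)$ norm. $C_P$ is the Poincaré constant: $\|v\|\le C_P\|\nabla v\|$ for all $v\in H_0^1(\Omega)$. $\mathbb V_h\subset H_0^1(\Omega)$ is the space of continuous piecewise linear finite element functions on a conforming shape-regular simplicial partition of $\Omega$. Let $f\in L^2(\Omega)$. For $y\in\mathbb R$, $w_h(y)\in\mathbb V_h$ is the unique solution of $\int_\Omega\nabla w_h(y)\cdot\nabla v_h+e^y\int_\Omega w_h(y)v_h=\int_\Omega fv_h$ for all $v_h\in\mathbb V_h$. *)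

theory Defs
  imports "HOL-Analysis.Analysis"
begin

definition bounded_domain :: "(real^'n) set \<Rightarrow> bool" where
  "bounded_domain \<Omega> \<longleftrightarrow> open \<Omega> \<and> bounded \<Omega> \<and> connected \<Omega> \<and> \<Omega> \<noteq> {}
     \<and> \<Omega> = interior (closure \<Omega>)"

text \<open>Conforming simplicial partition of the closure of Omega into d-simplices;
  since the closure is a finite union of simplices, Omega is polyhedral.\<close>
definition conforming_triangulation :: "(real^'n) set set \<Rightarrow> (real^'n) set \<Rightarrow> bool" where
  "conforming_triangulation \<T> \<Omega> \<longleftrightarrow>
     finite \<T> \<and> \<T> \<noteq> {} \<and>
     (\<forall>T\<in>\<T>. int CARD('n) simplex T) \<and>
     \<Union>\<T> = closure \<Omega> \<and>
     (\<forall>T1\<in>\<T>. \<forall>T2\<in>\<T>. (T1 \<inter> T2) face_of T1 \<and> (T1 \<inter> T2) face_of T2)"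

text \<open>Continuous piecewise linear finite element space with zero boundary values
  (functions extended by zero outside Omega).\<close>
definition P1_space :: "(real^'n) set set \<Rightarrow> (real^'n) set \<Rightarrow> (real^'n \<Rightarrow> real) set" where
  "P1_space \<T> \<Omega> = {v. continuous_on (closure \<Omega>) v
       \<and> (\<forall>T\<in>\<T>. \<exists>a b. \<forall>x\<in>T. v x = a \<bullet> x + b)
       \<and> (\<forall>x. x \<notin> \<Omega> \<longrightarrow> v x = 0)}"

text \<open>Pointwise gradient (exists a.e. for piecewise linear functions; set to 0 elsewhere).\<close>
definition grad :: "(real^'n \<Rightarrow> real) \<Rightarrow> real^'n \<Rightarrow> real^'n" where
  "grad v x = (if \<exists>D. GDERIV v x :> D then (THE D. GDERIV v x :> D) else 0)"

definition L2_norm :: "(real^'n) set \<Rightarrow> (real^'n \<Rightarrow> real) \<Rightarrow> real" where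
  "L2_norm \<Omega> u = sqrt (\<integral>x. (u x)\<^sup>2 \<partial>(lebesgue_on \<Omega>))"

definition L2_norm_grad :: "(real^'n) set \<Rightarrow> (real^'n \<Rightarrow> real) \<Rightarrow> real" where
  "L2_norm_grad \<Omega> u = sqrt (\<integral>x. (norm (grad u x))\<^sup>2 \<partial>(lebesgue_on \<Omega>))"

definition in_L2 :: "(real^'n) set \<Rightarrow> (real^'n \<Rightarrow> real) \<Rightarrow> bool" where
  "in_L2 \<Omega> f \<longleftrightarrow> f \<in> borel_measurable (lebesgue_on \<Omega>)
      \<and> integrable (lebesgue_on \<Omega>) (\<lambda>x. (f x)\<^sup>2)"

end

theory Submission
  imports Defs
begin


lemma meas_off_null:
  fixes g :: "real^'n \<Rightarrow> 'b::euclidean_space"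
  assumes "closed N" "negligible N" "continuous_on (-N) g"
  shows "g \<in> borel_measurable (lebesgue_on S)"
proof -
  have "(\<lambda>x. indicator (-N) x *\<^sub>R g x) \<in> borel_measurable borel"
    using assms by (intro borel_measurable_continuous_on_indicator) auto
  hence "(\<lambda>x. indicator (-N) x *\<^sub>R g x) \<in> borel_measurable lebesgue"
    by (simp add: measurable_completion)
  moreover have "AE x in lebesgue. indicator (-N) x *\<^sub>R g x = g x"
  proof -
    have "AE x in lebesgue. x \<notin> N" using assms(2) by (intro AE_not_in) (simp add: negligible_iff_null_sets)
    thus ?thesis by (rule eventually_mono) auto
  qed
  ultimately have "g \<in> borel_measurable lebesgue" by (rule borel_measurable_AE)
  thus ?thesis by (simp add: measurable_restrict_space1)
qed

lemma gderiv_affine: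
  fixes u :: "real^'n \<Rightarrow> real"
  assumes "r > 0" "\<forall>z\<in>ball x r. u z = a \<bullet> z + b"
  shows "GDERIV u x :> a"
proof -
  have "((\<lambda>z. a \<bullet> z + b) has_derivative (\<lambda>h. h \<bullet> a)) (at x)"
    by (auto intro!: derivative_eq_intros simp: inner_commute)
  hence "(u has_derivative (\<lambda>h. h \<bullet> a)) (at x)"
    by (rule has_derivative_transform_within_open[where s="ball x r"]) (use assms in auto)
  thus ?thesis by (simp add: gderiv_def)
qed

lemma gderiv_unique:
  fixes u :: "real^'n \<Rightarrow> real"
  assumes "GDERIV u x :> a" "GDERIV u x :> d"
  shows "d = a"
proof -
  have "(\<lambda>h. h \<bullet> a) = (\<lambda>h. h \<bullet> d)"
    using assms unfolding gderiv_def by (rule has_derivative_unique)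
  hence "(d - a) \<bullet> a = (d - a) \<bullet> d" by metis
  hence "(d - a) \<bullet> (d - a) = 0" by (simp add: inner_diff_right)
  thus ?thesis by simp
qed

lemma grad_eq:
  fixes u :: "real^'n \<Rightarrow> real"
  assumes "GDERIV u x :> a"
  shows "grad u x = a"
proof -
  have "(THE D. GDERIV u x :> D) = a"
    using assms gderiv_unique by (intro the_equality) blast+
  thus ?thesis using assms unfolding grad_def by auto
qed

definition LA :: "(real^'n) set \<Rightarrow> real \<Rightarrow> (real^'n \<Rightarrow> real) \<Rightarrow> bool" where
  "LA N B u \<longleftrightarrow> (\<forall>x. x \<notin> N \<longrightarrow> (\<exists>a b r. r > 0 \<and> norm a \<le> B \<and> (\<forall>z\<in>ball x r. u z = a \<bullet> z + b)))"

lemma P1_LA: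
  assumes tri: "conforming_triangulation \<T> \<Omega>" and u: "u \<in> P1_space \<T> \<Omega>"
  shows "\<exists>B. LA (\<Union>T\<in>\<T>. frontier T) B u"
proof -
  have "\<forall>T\<in>\<T>. \<exists>a b. \<forall>x\<in>T. u x = a \<bullet> x + b" using u by (simp add: P1_space_def)
  from bchoice[OF this] obtain A where "\<forall>T\<in>\<T>. \<exists>b. \<forall>x\<in>T. u x = A T \<bullet> x + b" ..
  from bchoice[OF this] obtain Bb where AB0: "\<forall>T\<in>\<T>. \<forall>x\<in>T. u x = A T \<bullet> x + Bb T" ..
  have fin: "finite \<T>" and cov: "\<Union>\<T> = closure \<Omega>" using tri by (auto simp: conforming_triangulation_def)
  have u0: "\<And>x. x \<notin> \<Omega> \<Longrightarrow> u x = 0" using u by (simp add: P1_space_def)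
  show ?thesis unfolding LA_def
  proof (intro exI[of _ "\<Sum>T\<in>\<T>. norm (A T)"] allI impI)
    fix x assume x: "x \<notin> (\<Union>T\<in>\<T>. frontier T)"
    show "\<exists>a b r. r > 0 \<and> norm a \<le> (\<Sum>T\<in>\<T>. norm (A T)) \<and> (\<forall>z\<in>ball x r. u z = a \<bullet> z + b)"
    proof (cases "x \<in> closure \<Omega>")
      case True
      then obtain T where T: "T \<in> \<T>" "x \<in> T" using cov by blast
      have xf: "x \<notin> frontier T" using x T(1) by blast
      have "x \<in> closure T" using T(2) closure_subset by blast
      hence xi: "x \<in> interior T" using xf unfolding frontier_def by blast
      obtain r where r: "r > 0" "ball x r \<subseteq> interior T"
        using open_interior[of T] xi unfolding open_contains_ball by blast
      have rT: "ball x r \<subseteq> T" using r(2) interior_subset by (rule subset_trans)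
      have "norm (A T) \<le> (\<Sum>T\<in>\<T>. norm (A T))"
        using fin T(1) by (intro member_le_sum) auto
      moreover have "\<forall>z\<in>ball x r. u z = A T \<bullet> z + Bb T" using AB0 T(1) rT by blast
      ultimately show ?thesis using r(1) by blast
    next
      case False
      have "open (- closure \<Omega>)" by (simp add: open_Compl)
      then obtain r where r: "r > 0" "ball x r \<subseteq> - closure \<Omega>"
        using False unfolding open_contains_ball by blast
      have "\<forall>z\<in>ball x r. u z = 0 \<bullet> z + 0"
      proof
        fix z assume "z \<in> ball x r"
        hence "z \<notin> \<Omega>" using r(2) closure_subset by blast
        thus "u z = 0 \<bullet> z + 0" using u0 by simp
      qed
      moreover have "norm (0::real^'n) \<le> (\<Sum>T\<in>\<T>. norm (A T))" by (simp add: sum_nonneg)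
      ultimately show ?thesis using r(1) by blast
    qed
  qed
qed

lemma LA_grad:
  assumes "LA N B u" "x \<notin> N"
  shows "norm (grad u x) \<le> B" "GDERIV u x :> grad u x" "\<exists>r>0. \<forall>z\<in>ball x r. grad u z = grad u x"
proof -
  obtain a b r where r: "r > 0" "norm a \<le> B" "\<forall>z\<in>ball x r. u z = a \<bullet> z + b"
    using assms unfolding LA_def by blast
  have *: "grad u z = a" if z: "z \<in> ball x r" for z
  proof -
    have sub: "ball z (r - dist x z) \<subseteq> ball x r"
    proof
      fix w assume "w \<in> ball z (r - dist x z)"
      thus "w \<in> ball x r" using dist_triangle[of x w z] by simp
    qed
    have pos: "r - dist x z > 0" using z by simp
    have "\<forall>w\<in>ball z (r - dist x z). u w = a \<bullet> w + b" using sub r(3) by blast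
    hence "GDERIV u z :> a" by (rule gderiv_affine[OF pos])
    thus ?thesis by (rule grad_eq)
  qed
  have xb: "x \<in> ball x r" using r(1) by simp
  have gx: "grad u x = a" using *[OF xb] .
  show "norm (grad u x) \<le> B" using gx r(2) by simp
  have "GDERIV u x :> a" by (rule gderiv_affine[OF r(1) r(3)])
  thus "GDERIV u x :> grad u x" using gx by simp
  have "\<forall>z\<in>ball x r. grad u z = grad u x" using * gx by simp
  thus "\<exists>r>0. \<forall>z\<in>ball x r. grad u z = grad u x" using r(1) by blast
qed

lemma LA_grad_cont:
  assumes "LA N B u" "closed N"
  shows "continuous_on (-N) (grad u)"
proof -
  have "isCont (grad u) x" if xN: "x \<notin> N" for x
  proof -
    obtain r where r: "r > 0" "\<forall>z\<in>ball x r. grad u z = grad u x" using LA_grad(3)[OF assms(1) xN] by blast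
    have "eventually (\<lambda>z. z \<in> ball x r) (nhds x)" using r(1) by (intro eventually_nhds_in_open) auto
    hence "\<forall>\<^sub>F z in nhds x. grad u z = grad u x" by (rule eventually_mono) (use r(2) in blast)
    hence "(grad u \<longlongrightarrow> grad u x) (nhds x)" by (rule tendsto_eventually)
    moreover have "at x \<le> nhds x" unfolding at_within_def by (rule inf_le1)
    ultimately show ?thesis unfolding isCont_def by (rule tendsto_mono[rotated])
  qed
  moreover have "open (-N)" using assms(2) by (simp add: open_Compl)
  ultimately show ?thesis by (intro continuous_at_imp_continuous_on) auto
qed



lemma sq_le:
  fixes X K :: real
  assumes "0 \<le> X" "0 \<le> K" "X\<^sup>2 \<le> K * X"
  shows "X \<le> K"
proof (cases "X = 0")
  case True thus ?thesis using assms by simp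
next
  case False
  hence "X > 0" using assms by simp
  moreover have "X * X \<le> K * X" using assms by (simp add: power2_eq_square)
  ultimately show ?thesis by simp
qed

lemma quad_bound:
  fixes X Y a c :: real
  assumes "0 < a" "X\<^sup>2 + a * Y\<^sup>2 \<le> c * Y"
  shows "X\<^sup>2 \<le> c\<^sup>2 / (4 * a)"
proof -
  have "c\<^sup>2 / (4 * a) - (c * Y - a * Y\<^sup>2) = (2 * a * Y - c)\<^sup>2 / (4 * a)"
    using assms(1) by (simp add: field_simps power2_eq_square)
  moreover have "(2 * a * Y - c)\<^sup>2 / (4 * a) \<ge> 0" using assms(1) by simp
  ultimately show ?thesis using assms(2) by linarith
qed

lemma abs_prod_le: "\<bar>(a::real) * b\<bar> \<le> a\<^sup>2 + b\<^sup>2"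
proof -
  have "2 * \<bar>a\<bar> * \<bar>b\<bar> \<le> \<bar>a\<bar>\<^sup>2 + \<bar>b\<bar>\<^sup>2" by (rule sum_squares_bound)
  moreover have "0 \<le> \<bar>a\<bar> * \<bar>b\<bar>" by simp
  moreover have "\<bar>a * b\<bar> = \<bar>a\<bar> * \<bar>b\<bar>" by (rule abs_mult)
  ultimately show ?thesis by simp
qed

lemma cont_bound:
  fixes u :: "real^'n \<Rightarrow> real"
  assumes "continuous_on (closure \<Omega>) u" "bounded \<Omega>"
  shows "\<exists>B. \<forall>x\<in>closure \<Omega>. \<bar>u x\<bar> \<le> B"
proof -
  have "compact (u ` closure \<Omega>)"
    using assms by (intro compact_continuous_image) (auto simp: compact_closure)
  hence "bounded (u ` closure \<Omega>)" by (rule compact_imp_bounded)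
  then obtain B where "\<forall>z\<in>u ` closure \<Omega>. norm z \<le> B" unfolding bounded_iff by blast
  thus ?thesis by auto
qed

lemma CS_integral:
  fixes f g :: "'a \<Rightarrow> real"
  assumes fm: "f \<in> borel_measurable M" and gm: "g \<in> borel_measurable M"
    and fi: "integrable M (\<lambda>x. (f x)\<^sup>2)" and gi: "integrable M (\<lambda>x. (g x)\<^sup>2)"
  shows "integrable M (\<lambda>x. f x * g x)"
    "\<bar>\<integral>x. f x * g x \<partial>M\<bar> \<le> sqrt (\<integral>x. (f x)\<^sup>2 \<partial>M) * sqrt (\<integral>x. (g x)\<^sup>2 \<partial>M)"
proof -
  show fgi: "integrable M (\<lambda>x. f x * g x)"
  proof (rule Bochner_Integration.integrable_bound[where f="\<lambda>x. (f x)\<^sup>2 + (g x)\<^sup>2"])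
    show "integrable M (\<lambda>x. (f x)\<^sup>2 + (g x)\<^sup>2)" using fi gi by simp
    show "(\<lambda>x. f x * g x) \<in> borel_measurable M" using fm gm by simp
    have "\<bar>f x * g x\<bar> \<le> (f x)\<^sup>2 + (g x)\<^sup>2" for x by (rule abs_prod_le)
    thus "AE x in M. norm (f x * g x) \<le> norm ((f x)\<^sup>2 + (g x)\<^sup>2)" by simp
  qed
  define A where "A = (\<integral>x. (f x)\<^sup>2 \<partial>M)"
  define B where "B = (\<integral>x. (g x)\<^sup>2 \<partial>M)"
  define C where "C = (\<integral>x. f x * g x \<partial>M)"
  have A0: "A \<ge> 0" unfolding A_def by (intro Bochner_Integration.integral_nonneg) auto
  have B0: "B \<ge> 0" unfolding B_def by (intro Bochner_Integration.integral_nonneg) auto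
  have q: "t\<^sup>2 * A - 2 * t * C + B \<ge> 0" for t
  proof -
    have "0 \<le> (\<integral>x. (t * f x - g x)\<^sup>2 \<partial>M)" by (intro Bochner_Integration.integral_nonneg) auto
    also have "\<dots> = (\<integral>x. t\<^sup>2 * (f x)\<^sup>2 + (- 2 * t) * (f x * g x) + (g x)\<^sup>2 \<partial>M)"
      by (intro Bochner_Integration.integral_cong) (auto simp: power2_eq_square algebra_simps)
    also have "\<dots> = (\<integral>x. t\<^sup>2 * (f x)\<^sup>2 \<partial>M) + (\<integral>x. (- 2 * t) * (f x * g x) \<partial>M) + (\<integral>x. (g x)\<^sup>2 \<partial>M)"
      using fi gi fgi by simp
    also have "\<dots> = t\<^sup>2 * A - 2 * t * C + B" unfolding A_def B_def C_def by simp
    finally show ?thesis .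
  qed
  have "C\<^sup>2 \<le> A * B"
  proof (cases "A = 0")
    case True
    have "C = 0"
    proof (rule ccontr)
      assume "C \<noteq> 0"
      have "(B + 1) / (2 * C) * C = (B + 1) / 2" using \<open>C \<noteq> 0\<close> by simp
      thus False using q[of "(B + 1) / (2 * C)"] True \<open>C \<noteq> 0\<close> by simp
    qed
    thus ?thesis using True by simp
  next
    case False
    hence Ap: "A > 0" using A0 by simp
    have "(C / A)\<^sup>2 * A - 2 * (C / A) * C + B \<ge> 0" by (rule q)
    hence "0 \<le> (B * A - C\<^sup>2) / A" using Ap by (simp add: field_simps power2_eq_square)
    hence "0 \<le> B * A - C\<^sup>2" using Ap by (simp add: zero_le_divide_iff)
    thus ?thesis by (simp add: mult.commute)
  qed
  hence "sqrt (C\<^sup>2) \<le> sqrt (A * B)" by (rule real_sqrt_le_mono)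
  thus "\<bar>\<integral>x. f x * g x \<partial>M\<bar> \<le> sqrt (\<integral>x. (f x)\<^sup>2 \<partial>M) * sqrt (\<integral>x. (g x)\<^sup>2 \<partial>M)"
    unfolding A_def B_def C_def by (simp add: real_sqrt_mult)
qed



lemma P1_diff:
  assumes "u \<in> P1_space \<T> \<Omega>" "v \<in> P1_space \<T> \<Omega>"
  shows "(\<lambda>x. u x - v x) \<in> P1_space \<T> \<Omega>"
proof -
  have "\<exists>a b. \<forall>x\<in>T. u x - v x = a \<bullet> x + b" if T: "T \<in> \<T>" for T
  proof -
    obtain a1 b1 where 1: "\<forall>x\<in>T. u x = a1 \<bullet> x + b1" using assms(1) T unfolding P1_space_def by blast
    obtain a2 b2 where 2: "\<forall>x\<in>T. v x = a2 \<bullet> x + b2" using assms(2) T unfolding P1_space_def by blast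
    have "\<forall>x\<in>T. u x - v x = (a1 - a2) \<bullet> x + (b1 - b2)" using 1 2 by (simp add: inner_diff_left)
    thus ?thesis by blast
  qed
  thus ?thesis using assms by (auto simp: P1_space_def intro!: continuous_on_diff)
qed

lemma setupN:
  assumes tri: "conforming_triangulation \<T> \<Omega>"
  shows "closed (\<Union>T\<in>\<T>. frontier T)" "negligible (\<Union>T\<in>\<T>. frontier T)"
proof -
  have fin: "finite \<T>" using tri by (simp add: conforming_triangulation_def)
  show "closed (\<Union>T\<in>\<T>. frontier T)" using fin by (intro closed_UN) auto
  have "convex T" if "T \<in> \<T>" for T
  proof -
    have "int CARD('a) simplex T" using tri that by (simp add: conforming_triangulation_def)
    thus ?thesis by (auto simp: simplex_def convex_convex_hull)
  qed
  thus "negligible (\<Union>T\<in>\<T>. frontier T)" using fin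
    by (intro negligible_Union) (auto intro: negligible_convex_frontier)
qed

lemma P1_fun:
  fixes u :: "real^'n \<Rightarrow> real"
  assumes dom: "bounded_domain \<Omega>" and u: "u \<in> P1_space \<T> \<Omega>"
  shows "u \<in> borel_measurable (lebesgue_on \<Omega>)" "\<exists>B. \<forall>x\<in>\<Omega>. \<bar>u x\<bar> \<le> B"
proof -
  have o: "open \<Omega>" "bounded \<Omega>" using dom by (auto simp: bounded_domain_def)
  have c: "continuous_on (closure \<Omega>) u" using u by (simp add: P1_space_def)
  hence "continuous_on \<Omega> u" using closure_subset continuous_on_subset by blast
  thus "u \<in> borel_measurable (lebesgue_on \<Omega>)" using o
    by (intro continuous_imp_measurable_on_sets_lebesgue) auto
  show "\<exists>B. \<forall>x\<in>\<Omega>. \<bar>u x\<bar> \<le> B" using cont_bound[OF c o(2)] closure_subset by blast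
qed

lemma P1_prod:
  fixes u v :: "real^'n \<Rightarrow> real"
  assumes dom: "bounded_domain \<Omega>" and u: "u \<in> P1_space \<T> \<Omega>" and v: "v \<in> P1_space \<T> \<Omega>"
  shows "integrable (lebesgue_on \<Omega>) (\<lambda>x. u x * v x)"
proof -
  have o: "open \<Omega>" "bounded \<Omega>" using dom by (auto simp: bounded_domain_def)
  interpret finite_measure "lebesgue_on \<Omega>" using o by (intro finite_measure_lebesgue_on lmeasurable_open)
  obtain B1 where B1: "\<forall>x\<in>\<Omega>. \<bar>u x\<bar> \<le> B1" using P1_fun[OF dom u] by blast
  obtain B2 where B2: "\<forall>x\<in>\<Omega>. \<bar>v x\<bar> \<le> B2" using P1_fun[OF dom v] by blast
  show ?thesis
  proof (rule integrable_const_bound[where B="B1 * B2"])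
    have "\<forall>x\<in>\<Omega>. norm (u x * v x) \<le> B1 * B2"
      using B1 B2 by (auto simp: abs_mult intro!: mult_mono)
    thus "AE x in lebesgue_on \<Omega>. norm (u x * v x) \<le> B1 * B2"
      using o by (intro AE_I2) (simp add: space_restrict_space)
    show "(\<lambda>x. u x * v x) \<in> borel_measurable (lebesgue_on \<Omega>)"
      using P1_fun[OF dom u] P1_fun[OF dom v] by simp
  qed
qed

lemma AE_N:
  assumes "negligible N" "open \<Omega>"
  shows "AE x in lebesgue_on \<Omega>. x \<notin> N"
proof -
  have "AE x in lebesgue. x \<notin> N" using assms(1) by (intro AE_not_in) (simp add: negligible_iff_null_sets)
  hence "AE x in lebesgue. x \<in> \<Omega> \<longrightarrow> x \<notin> N" by (rule eventually_mono) auto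
  thus ?thesis using assms(2) by (subst AE_restrict_space_iff) auto
qed

lemma grad_prod:
  fixes u v :: "real^'n \<Rightarrow> real"
  assumes dom: "bounded_domain \<Omega>" and tri: "conforming_triangulation \<T> \<Omega>"
    and u: "u \<in> P1_space \<T> \<Omega>" and v: "v \<in> P1_space \<T> \<Omega>"
  shows "integrable (lebesgue_on \<Omega>) (\<lambda>x. grad u x \<bullet> grad v x)"
    "(\<lambda>x. grad u x \<bullet> grad v x) \<in> borel_measurable (lebesgue_on \<Omega>)"
proof -
  let ?N = "\<Union>T\<in>\<T>. frontier T"
  have o: "open \<Omega>" "bounded \<Omega>" using dom by (auto simp: bounded_domain_def)
  interpret finite_measure "lebesgue_on \<Omega>" using o by (intro finite_measure_lebesgue_on lmeasurable_open)
  obtain B1 where B1: "LA ?N B1 u" using P1_LA[OF tri u] by blast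
  obtain B2 where B2: "LA ?N B2 v" using P1_LA[OF tri v] by blast
  have "continuous_on (-?N) (\<lambda>x. grad u x \<bullet> grad v x)"
    using LA_grad_cont[OF B1 setupN(1)[OF tri]] LA_grad_cont[OF B2 setupN(1)[OF tri]]
    by (intro continuous_on_inner)
  thus m: "(\<lambda>x. grad u x \<bullet> grad v x) \<in> borel_measurable (lebesgue_on \<Omega>)"
    using setupN[OF tri] by (intro meas_off_null) auto
  show "integrable (lebesgue_on \<Omega>) (\<lambda>x. grad u x \<bullet> grad v x)"
  proof (rule integrable_const_bound[where B="B1 * B2"])
    have "norm (grad u x \<bullet> grad v x) \<le> B1 * B2" if "x \<notin> ?N" for x
    proof -
      have "norm (grad u x \<bullet> grad v x) \<le> norm (grad u x) * norm (grad v x)"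
        by (simp add: Cauchy_Schwarz_ineq2)
      also have "\<dots> \<le> B1 * B2"
        using LA_grad(1)[OF B1 that] LA_grad(1)[OF B2 that] by (meson mult_mono norm_ge_zero order_trans)
      finally show ?thesis .
    qed
    thus "AE x in lebesgue_on \<Omega>. norm (grad u x \<bullet> grad v x) \<le> B1 * B2"
      using AE_N[OF setupN(2)[OF tri] o(1)] by (auto elim!: eventually_mono)
  qed (rule m)
qed

lemma grad_diff_AE:
  fixes u v :: "real^'n \<Rightarrow> real"
  assumes dom: "bounded_domain \<Omega>" and tri: "conforming_triangulation \<T> \<Omega>"
    and u: "u \<in> P1_space \<T> \<Omega>" and v: "v \<in> P1_space \<T> \<Omega>"
  shows "AE x in lebesgue_on \<Omega>. grad (\<lambda>x. u x - v x) x = grad u x - grad v x"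
proof -
  let ?N = "\<Union>T\<in>\<T>. frontier T"
  have o: "open \<Omega>" using dom by (auto simp: bounded_domain_def)
  obtain B1 where B1: "LA ?N B1 u" using P1_LA[OF tri u] by blast
  obtain B2 where B2: "LA ?N B2 v" using P1_LA[OF tri v] by blast
  have "grad (\<lambda>x. u x - v x) x = grad u x - grad v x" if "x \<notin> ?N" for x
    using LA_grad(2)[OF B1 that] LA_grad(2)[OF B2 that] by (intro grad_eq GDERIV_diff)
  thus ?thesis using AE_N[OF setupN(2)[OF tri] o] by (auto elim!: eventually_mono)
qed



theorem lemma2p1:
  fixes \<Omega> :: "(real^'n) set" and \<T> :: "(real^'n) set set"
    and f :: "real^'n \<Rightarrow> real" and w :: "real \<Rightarrow> real^'n \<Rightarrow> real"
    and C_P y ybar :: real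
  assumes dim: "CARD('n) \<le> 3"
    and dom: "bounded_domain \<Omega>"
    and tri: "conforming_triangulation \<T> \<Omega>"
    and f: "in_L2 \<Omega> f"
    and CP_pos: "C_P > 0"
    and poincare: "\<forall>v\<in>P1_space \<T> \<Omega>. L2_norm \<Omega> v \<le> C_P * L2_norm_grad \<Omega> v"
    and w_mem: "\<forall>t. w t \<in> P1_space \<T> \<Omega>"
    and w_eq: "\<forall>t. \<forall>v\<in>P1_space \<T> \<Omega>.
        (\<integral>x. grad (w t) x \<bullet> grad v x \<partial>(lebesgue_on \<Omega>))
          + exp t * (\<integral>x. w t x * v x \<partial>(lebesgue_on \<Omega>))
        = (\<integral>x. f x * v x \<partial>(lebesgue_on \<Omega>))"
  shows "L2_norm_grad \<Omega> (w y) \<le> C_P * L2_norm \<Omega> f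
    \<and> L2_norm \<Omega> (w y) \<le> exp (- y) * L2_norm \<Omega> f
    \<and> L2_norm_grad \<Omega> (\<lambda>x. w y x - w ybar x) \<le> C_P ^ 3 * \<bar>exp y - exp ybar\<bar> * L2_norm \<Omega> f
    \<and> L2_norm \<Omega> (\<lambda>x. w y x - w ybar x) \<le> exp (- y) * \<bar>exp (y - ybar) - 1\<bar> * L2_norm \<Omega> f
    \<and> L2_norm_grad \<Omega> (\<lambda>x. w y x - w ybar x) \<le> 1/2 * exp (- y / 2) * \<bar>exp (y - ybar) - 1\<bar> * L2_norm \<Omega> f"
proof -
  let ?M = "lebesgue_on \<Omega>"
  define e where "e = (\<lambda>x. w y x - w ybar x)"
  have eP: "e \<in> P1_space \<T> \<Omega>" unfolding e_def using w_mem by (intro P1_diff) auto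
  have fm: "f \<in> borel_measurable ?M" and fi: "integrable ?M (\<lambda>x. (f x)\<^sup>2)"
    using f by (auto simp: in_L2_def)
  define F where "F = L2_norm \<Omega> f"
  have F0: "F \<ge> 0" unfolding F_def L2_norm_def by (intro real_sqrt_ge_zero Bochner_Integration.integral_nonneg) auto
  have L2sq: "(L2_norm \<Omega> u)\<^sup>2 = (\<integral>x. u x * u x \<partial>?M)" for u
  proof -
    have "(\<integral>x. (u x)\<^sup>2 \<partial>?M) \<ge> 0" by (intro Bochner_Integration.integral_nonneg) auto
    thus ?thesis unfolding L2_norm_def by (simp add: power2_eq_square)
  qed
  have L2gsq: "(L2_norm_grad \<Omega> u)\<^sup>2 = (\<integral>x. grad u x \<bullet> grad u x \<partial>?M)" for u
  proof -
    have "(\<integral>x. (norm (grad u x))\<^sup>2 \<partial>?M) \<ge> 0" by (intro Bochner_Integration.integral_nonneg) auto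
    thus ?thesis unfolding L2_norm_grad_def by (simp add: power2_norm_eq_inner)
  qed
  have L20: "L2_norm \<Omega> u \<ge> 0" for u
    unfolding L2_norm_def by (intro real_sqrt_ge_zero Bochner_Integration.integral_nonneg) auto
  have L2g0: "L2_norm_grad \<Omega> u \<ge> 0" for u
    unfolding L2_norm_grad_def by (intro real_sqrt_ge_zero Bochner_Integration.integral_nonneg) auto
  have CS: "\<bar>\<integral>x. g x * u x \<partial>?M\<bar> \<le> L2_norm \<Omega> g * L2_norm \<Omega> u"
    if "g \<in> borel_measurable ?M" "integrable ?M (\<lambda>x. (g x)\<^sup>2)" "u \<in> P1_space \<T> \<Omega>" for g u
  proof -
    have "integrable ?M (\<lambda>x. u x * u x)" using P1_prod[OF dom that(3) that(3)] .
    hence "integrable ?M (\<lambda>x. (u x)\<^sup>2)" by (simp add: power2_eq_square)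
    thus ?thesis unfolding L2_norm_def
      using CS_integral(2)[OF that(1) P1_fun(1)[OF dom that(3)] that(2)] by blast
  qed
  have energy: "(L2_norm_grad \<Omega> (w t))\<^sup>2 + exp t * (L2_norm \<Omega> (w t))\<^sup>2 \<le> F * L2_norm \<Omega> (w t)" for t
  proof -
    have "(L2_norm_grad \<Omega> (w t))\<^sup>2 + exp t * (L2_norm \<Omega> (w t))\<^sup>2 = (\<integral>x. f x * w t x \<partial>?M)"
      using w_eq w_mem by (simp add: L2sq L2gsq)
    also have "\<dots> \<le> F * L2_norm \<Omega> (w t)"
    proof -
      have "\<bar>\<integral>x. f x * w t x \<partial>?M\<bar> \<le> F * L2_norm \<Omega> (w t)"
        unfolding F_def using CS[OF fm fi] w_mem by blast
      thus ?thesis by (rule order_trans[OF abs_ge_self])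
    qed
    finally show ?thesis .
  qed
  have c1: "L2_norm_grad \<Omega> (w t) \<le> C_P * F" for t
  proof (rule sq_le)
    show "0 \<le> L2_norm_grad \<Omega> (w t)" by (rule L2g0)
    show "0 \<le> C_P * F" using CP_pos F0 by simp
    have "(L2_norm_grad \<Omega> (w t))\<^sup>2 \<le> F * L2_norm \<Omega> (w t)"
      using energy[of t] by (smt (verit) exp_gt_zero zero_le_power2 mult_nonneg_nonneg)
    also have "\<dots> \<le> F * (C_P * L2_norm_grad \<Omega> (w t))"
      using poincare w_mem F0 by (intro mult_left_mono) auto
    finally show "(L2_norm_grad \<Omega> (w t))\<^sup>2 \<le> C_P * F * L2_norm_grad \<Omega> (w t)" by (simp add: ac_simps)
  qed
  have c2: "L2_norm \<Omega> (w t) \<le> exp (- t) * F" for t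
  proof (rule sq_le)
    show "0 \<le> L2_norm \<Omega> (w t)" by (rule L20)
    show "0 \<le> exp (- t) * F" using F0 by simp
    have "exp t * (L2_norm \<Omega> (w t))\<^sup>2 \<le> F * L2_norm \<Omega> (w t)"
      using energy[of t] by (smt (verit) zero_le_power2)
    hence "exp (-t) * (exp t * (L2_norm \<Omega> (w t))\<^sup>2) \<le> exp (-t) * (F * L2_norm \<Omega> (w t))"
      by (intro mult_left_mono) auto
    thus "(L2_norm \<Omega> (w t))\<^sup>2 \<le> exp (- t) * F * L2_norm \<Omega> (w t)"
      by (simp add: exp_minus field_simps)
  qed
  define I where "I = (\<integral>x. w ybar x * e x \<partial>?M)"
  have diffeq: "(L2_norm_grad \<Omega> e)\<^sup>2 + exp y * (L2_norm \<Omega> e)\<^sup>2 = (exp ybar - exp y) * I"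
  proof -
    have wy: "w y \<in> P1_space \<T> \<Omega>" and wb: "w ybar \<in> P1_space \<T> \<Omega>" using w_mem by auto
    have e1: "(\<integral>x. grad (w y) x \<bullet> grad e x \<partial>?M) + exp y * (\<integral>x. w y x * e x \<partial>?M)
        = (\<integral>x. f x * e x \<partial>?M)" using w_eq eP by blast
    have e2: "(\<integral>x. grad (w ybar) x \<bullet> grad e x \<partial>?M) + exp ybar * (\<integral>x. w ybar x * e x \<partial>?M)
        = (\<integral>x. f x * e x \<partial>?M)" using w_eq eP by blast
    have "(\<integral>x. grad (w y) x \<bullet> grad e x \<partial>?M) - (\<integral>x. grad (w ybar) x \<bullet> grad e x \<partial>?M)
        = (\<integral>x. grad (w y) x \<bullet> grad e x - grad (w ybar) x \<bullet> grad e x \<partial>?M)"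
      using grad_prod(1)[OF dom tri wy eP] grad_prod(1)[OF dom tri wb eP] by simp
    also have "\<dots> = (\<integral>x. grad e x \<bullet> grad e x \<partial>?M)"
    proof (rule integral_cong_AE)
      show "(\<lambda>x. grad (w y) x \<bullet> grad e x - grad (w ybar) x \<bullet> grad e x) \<in> borel_measurable ?M"
        using grad_prod(2)[OF dom tri wy eP] grad_prod(2)[OF dom tri wb eP] by simp
      show "(\<lambda>x. grad e x \<bullet> grad e x) \<in> borel_measurable ?M" using grad_prod(2)[OF dom tri eP eP] .
      show "AE x in ?M. grad (w y) x \<bullet> grad e x - grad (w ybar) x \<bullet> grad e x = grad e x \<bullet> grad e x"
        using grad_diff_AE[OF dom tri wy wb] unfolding e_def
        by (rule eventually_mono) (simp add: inner_diff_left)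
    qed
    finally have g: "(\<integral>x. grad (w y) x \<bullet> grad e x \<partial>?M) - (\<integral>x. grad (w ybar) x \<bullet> grad e x \<partial>?M)
        = (L2_norm_grad \<Omega> e)\<^sup>2" by (simp add: L2gsq)
    have "(\<integral>x. w y x * e x \<partial>?M) = (\<integral>x. e x * e x + w ybar x * e x \<partial>?M)"
      by (intro Bochner_Integration.integral_cong) (auto simp: e_def algebra_simps)
    also have "\<dots> = (L2_norm \<Omega> e)\<^sup>2 + I"
      using P1_prod[OF dom eP eP] P1_prod[OF dom wb eP] by (simp add: L2sq I_def)
    finally have m: "(\<integral>x. w y x * e x \<partial>?M) = (L2_norm \<Omega> e)\<^sup>2 + I" .
    show ?thesis using e1 e2 g m unfolding I_def by (simp add: algebra_simps)
  qed
  define D where "D = \<bar>exp y - exp ybar\<bar>"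
  have D0: "D \<ge> 0" unfolding D_def by simp
  have Ib: "\<bar>I\<bar> \<le> L2_norm \<Omega> (w ybar) * L2_norm \<Omega> e"
    unfolding I_def
  proof (rule CS)
    have wb: "w ybar \<in> P1_space \<T> \<Omega>" using w_mem by auto
    show "w ybar \<in> borel_measurable ?M" using P1_fun(1)[OF dom wb] .
    show "integrable ?M (\<lambda>x. (w ybar x)\<^sup>2)" using P1_prod[OF dom wb wb] by (simp add: power2_eq_square)
  qed (rule eP)
  have key: "(L2_norm_grad \<Omega> e)\<^sup>2 + exp y * (L2_norm \<Omega> e)\<^sup>2 \<le> D * L2_norm \<Omega> (w ybar) * L2_norm \<Omega> e"
  proof -
    have "(exp ybar - exp y) * I \<le> \<bar>exp ybar - exp y\<bar> * \<bar>I\<bar>" by (simp add: abs_mult[symmetric])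
    also have "\<dots> \<le> D * (L2_norm \<Omega> (w ybar) * L2_norm \<Omega> e)"
      unfolding D_def using Ib by (simp add: abs_minus_commute mult_left_mono)
    finally show ?thesis using diffeq by (simp add: ac_simps)
  qed
  have eb: "exp (- y) * \<bar>exp (y - ybar) - 1\<bar> = exp (- y) * D * exp (- ybar)"
  proof -
    have "exp (y - ybar) - 1 = (exp y - exp ybar) * exp (- ybar)"
      by (simp add: exp_diff exp_minus field_simps)
    hence "\<bar>exp (y - ybar) - 1\<bar> = D * exp (- ybar)" unfolding D_def by (simp add: abs_mult)
    thus ?thesis by simp
  qed
  have c3: "L2_norm_grad \<Omega> e \<le> C_P ^ 3 * D * F"
  proof (rule sq_le)
    show "0 \<le> L2_norm_grad \<Omega> e" by (rule L2g0)
    show "0 \<le> C_P ^ 3 * D * F" using CP_pos F0 D0 by simp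
    have "(L2_norm_grad \<Omega> e)\<^sup>2 \<le> D * L2_norm \<Omega> (w ybar) * L2_norm \<Omega> e"
      using key by (smt (verit) exp_gt_zero zero_le_power2 mult_nonneg_nonneg)
    also have "\<dots> \<le> D * (C_P * (C_P * F)) * (C_P * L2_norm_grad \<Omega> e)"
    proof (intro mult_mono mult_left_mono)
      have "L2_norm \<Omega> (w ybar) \<le> C_P * L2_norm_grad \<Omega> (w ybar)" using poincare w_mem by auto
      also have "\<dots> \<le> C_P * (C_P * F)" using c1 CP_pos by (intro mult_left_mono) auto
      finally show "L2_norm \<Omega> (w ybar) \<le> C_P * (C_P * F)" .
      show "L2_norm \<Omega> e \<le> C_P * L2_norm_grad \<Omega> e" using poincare eP by auto
    qed (use D0 CP_pos F0 L20 L2g0 in auto)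
    finally show "(L2_norm_grad \<Omega> e)\<^sup>2 \<le> C_P ^ 3 * D * F * L2_norm_grad \<Omega> e"
      by (simp add: power3_eq_cube ac_simps)
  qed
  have c4: "L2_norm \<Omega> e \<le> exp (- y) * D * exp (- ybar) * F"
  proof (rule sq_le)
    show "0 \<le> L2_norm \<Omega> e" by (rule L20)
    show "0 \<le> exp (- y) * D * exp (- ybar) * F" using D0 F0 by simp
    have "exp y * (L2_norm \<Omega> e)\<^sup>2 \<le> D * L2_norm \<Omega> (w ybar) * L2_norm \<Omega> e"
      using key by (smt (verit) zero_le_power2)
    also have "\<dots> \<le> D * (exp (- ybar) * F) * L2_norm \<Omega> e"
      using c2[of ybar] D0 L20 by (intro mult_right_mono mult_left_mono) auto
    finally have "exp (-y) * (exp y * (L2_norm \<Omega> e)\<^sup>2) \<le> exp (-y) * (D * (exp (- ybar) * F) * L2_norm \<Omega> e)"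
      by (intro mult_left_mono) auto
    thus "(L2_norm \<Omega> e)\<^sup>2 \<le> exp (- y) * D * exp (- ybar) * F * L2_norm \<Omega> e"
      by (simp add: exp_minus field_simps)
  qed
  have c5: "L2_norm_grad \<Omega> e \<le> 1/2 * exp (- y / 2) * (D * exp (- ybar)) * F"
  proof -
    define c where "c = D * exp (- ybar) * F"
    have c0: "c \<ge> 0" unfolding c_def using D0 F0 by simp
    have "(L2_norm_grad \<Omega> e)\<^sup>2 + exp y * (L2_norm \<Omega> e)\<^sup>2 \<le> c * L2_norm \<Omega> e"
    proof -
      have "D * L2_norm \<Omega> (w ybar) * L2_norm \<Omega> e \<le> D * (exp (- ybar) * F) * L2_norm \<Omega> e"
        using c2[of ybar] D0 L20 by (intro mult_right_mono mult_left_mono) auto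
      thus ?thesis using key unfolding c_def by (simp add: ac_simps)
    qed
    hence "(L2_norm_grad \<Omega> e)\<^sup>2 \<le> c\<^sup>2 / (4 * exp y)" by (intro quad_bound) auto
    also have "\<dots> = (1/2 * exp (- y / 2) * c)\<^sup>2"
    proof -
      have "exp (- y / 2) * exp (- y / 2) = exp (- y)" by (simp add: exp_add[symmetric])
      thus ?thesis by (simp add: power2_eq_square exp_minus field_simps)
    qed
    finally have "(L2_norm_grad \<Omega> e)\<^sup>2 \<le> (1/2 * exp (- y / 2) * c)\<^sup>2" .
    hence "L2_norm_grad \<Omega> e \<le> 1/2 * exp (- y / 2) * c"
      by (rule power2_le_imp_le) (use c0 in simp)
    thus ?thesis unfolding c_def by (simp add: ac_simps)
  qed
  show ?thesis
  proof (intro conjI)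
    show "L2_norm_grad \<Omega> (w y) \<le> C_P * L2_norm \<Omega> f" using c1 unfolding F_def .
    show "L2_norm \<Omega> (w y) \<le> exp (- y) * L2_norm \<Omega> f" using c2 unfolding F_def .
    show "L2_norm_grad \<Omega> (\<lambda>x. w y x - w ybar x) \<le> C_P ^ 3 * \<bar>exp y - exp ybar\<bar> * L2_norm \<Omega> f"
      using c3 unfolding F_def D_def e_def .
    show "L2_norm \<Omega> (\<lambda>x. w y x - w ybar x) \<le> exp (- y) * \<bar>exp (y - ybar) - 1\<bar> * L2_norm \<Omega> f"
      using c4 eb unfolding F_def e_def by simp
    have "\<bar>exp (y - ybar) - 1\<bar> = D * exp (- ybar)" using eb by simp
    thus "L2_norm_grad \<Omega> (\<lambda>x. w y x - w ybar x) \<le> 1/2 * exp (- y / 2) * \<bar>exp (y - ybar) - 1\<bar> * L2_norm \<Omega> f"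
      using c5 unfolding F_def e_def by simp
  qed
qed


end
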